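(* Let $\mathfrak{g}=\prod_{i=1}^k\mathfrak{q}_i$ be a semisimple complex Lie algebra with each $\mathfrak{q}_i$ simple of type $A_{n_i}$. Let $r$ denote the rank of $\mathfrak{g}$ and let $V$ be a faithful representation of $\mathfrak{g}$. Let $\langle-,-\rangle$ be any $W_{\mathfrak{g}}$-invariant inner product on $\Lambda_{\mathfrak{g}}\otimes\mathbb{R}$, and let $W_{\max}$ denote the set of weights of $V$ of maximal norm. If $W_{\max}$ spans $\Lambda_{\mathfrak{g}}\otimes\mathbb{R}$, then $\#W_{\max}\geq r+1$, with equality holding possibly only if $k=1$.
   Context: $\Lambda_{\mathfrak{g}}$ is the weight lattice of $\mathfrak{g}$ (with respect to a fixed Cartan subalgebra) and $W_{\mathfrak{g}}$ its Weyl group; weights of $V$ are the characters of the Cartan subalgebra occurring in $V$. *)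

theory Defs
  imports Complex_Main "Jordan_Normal_Form.Matrix"
begin

text \<open>The Lie algebra g = prod_{i<k} sl(n_i+1, C), given by the list ns = [n_0,...,n_{k-1}].
  An element is a function i |-> (n_i+1)x(n_i+1) traceless complex matrix (zero 0x0 matrix for i >= k).\<close>

definition lie_carrier :: "nat list \<Rightarrow> (nat \<Rightarrow> complex mat) set" where
  "lie_carrier ns = {X. (\<forall>i < length ns. X i \<in> carrier_mat (ns!i + 1) (ns!i + 1)
        \<and> (\<Sum>j\<le>ns!i. X i $$ (j, j)) = 0) \<and> (\<forall>i \<ge> length ns. X i = 0\<^sub>m 0 0)}"

definition lie_add :: "(nat \<Rightarrow> complex mat) \<Rightarrow> (nat \<Rightarrow> complex mat) \<Rightarrow> (nat \<Rightarrow> complex mat)" where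
  "lie_add X Y = (\<lambda>i. X i + Y i)"

definition lie_smult :: "complex \<Rightarrow> (nat \<Rightarrow> complex mat) \<Rightarrow> (nat \<Rightarrow> complex mat)" where
  "lie_smult a X = (\<lambda>i. a \<cdot>\<^sub>m X i)"

definition lie_bracket :: "(nat \<Rightarrow> complex mat) \<Rightarrow> (nat \<Rightarrow> complex mat) \<Rightarrow> (nat \<Rightarrow> complex mat)" where
  "lie_bracket X Y = (\<lambda>i. X i * Y i - Y i * X i)"

definition is_rep :: "nat list \<Rightarrow> nat \<Rightarrow> ((nat \<Rightarrow> complex mat) \<Rightarrow> complex mat) \<Rightarrow> bool" where
  "is_rep ns d \<rho> \<longleftrightarrow>
     (\<forall>X \<in> lie_carrier ns. \<rho> X \<in> carrier_mat d d) \<and>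
     (\<forall>X \<in> lie_carrier ns. \<forall>Y \<in> lie_carrier ns. \<rho> (lie_add X Y) = \<rho> X + \<rho> Y) \<and>
     (\<forall>a. \<forall>X \<in> lie_carrier ns. \<rho> (lie_smult a X) = a \<cdot>\<^sub>m \<rho> X) \<and>
     (\<forall>X \<in> lie_carrier ns. \<forall>Y \<in> lie_carrier ns.
         \<rho> (lie_bracket X Y) = \<rho> X * \<rho> Y - \<rho> Y * \<rho> X)"

definition faithful_rep :: "nat list \<Rightarrow> nat \<Rightarrow> ((nat \<Rightarrow> complex mat) \<Rightarrow> complex mat) \<Rightarrow> bool" where
  "faithful_rep ns d \<rho> \<longleftrightarrow> is_rep ns d \<rho> \<and> inj_on \<rho> (lie_carrier ns)"

definition cartan :: "nat list \<Rightarrow> (nat \<Rightarrow> complex mat) set" where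
  "cartan ns = {H \<in> lie_carrier ns. \<forall>i < length ns. diagonal_mat (H i)}"

definition idx :: "nat list \<Rightarrow> (nat \<times> nat) set" where
  "idx ns = {(i, j). i < length ns \<and> j \<le> ns!i}"

text \<open>A functional on h is written H |-> sum_{i,j} c i j * (H i)_{jj}; on the factor sl(n_i+1)
  the coefficients are determined modulo constants, and we normalise them to sum zero.
  So Lambda_g \<otimes> R is identified with the coefficient vectors c, supported on idx ns,
  with sum_j c i j = 0 for every i.\<close>

definition wt_space :: "nat list \<Rightarrow> (nat \<Rightarrow> nat \<Rightarrow> real) set" where
  "wt_space ns = {c. (\<forall>i j. (i, j) \<notin> idx ns \<longrightarrow> c i j = 0) \<and>
                     (\<forall>i < length ns. (\<Sum>j\<le>ns!i. c i j) = 0)}"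

definition wt_eval :: "nat list \<Rightarrow> (nat \<Rightarrow> nat \<Rightarrow> real) \<Rightarrow> (nat \<Rightarrow> complex mat) \<Rightarrow> complex" where
  "wt_eval ns c H = (\<Sum>i<length ns. \<Sum>j\<le>ns!i. complex_of_real (c i j) * H i $$ (j, j))"

definition weights :: "nat list \<Rightarrow> nat \<Rightarrow> ((nat \<Rightarrow> complex mat) \<Rightarrow> complex mat)
                         \<Rightarrow> (nat \<Rightarrow> nat \<Rightarrow> real) set" where
  "weights ns d \<rho> = {c \<in> wt_space ns. \<exists>v \<in> carrier_vec d. v \<noteq> 0\<^sub>v d \<and>
       (\<forall>H \<in> cartan ns. \<rho> H *\<^sub>v v = wt_eval ns c H \<cdot>\<^sub>v v)}"

text \<open>Weyl group S_{n_0+1} x ... x S_{n_{k-1}+1}, acting by permuting coordinates.\<close>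

definition weyl :: "nat list \<Rightarrow> (nat \<Rightarrow> nat \<Rightarrow> nat) set" where
  "weyl ns = {\<sigma>. \<forall>i < length ns. bij_betw (\<sigma> i) {..ns!i} {..ns!i}}"

definition weyl_act :: "nat list \<Rightarrow> (nat \<Rightarrow> nat \<Rightarrow> nat) \<Rightarrow> (nat \<Rightarrow> nat \<Rightarrow> real) \<Rightarrow> (nat \<Rightarrow> nat \<Rightarrow> real)" where
  "weyl_act ns \<sigma> c = (\<lambda>i j. if (i, j) \<in> idx ns then c i (\<sigma> i j) else 0)"

definition weyl_inv_inner :: "nat list \<Rightarrow> ((nat \<Rightarrow> nat \<Rightarrow> real) \<Rightarrow> (nat \<Rightarrow> nat \<Rightarrow> real) \<Rightarrow> real) \<Rightarrow> bool" where
  "weyl_inv_inner ns B \<longleftrightarrow>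
     (\<forall>a b. \<forall>x \<in> wt_space ns. \<forall>y \<in> wt_space ns. \<forall>z \<in> wt_space ns.
        B (\<lambda>i j. a * x i j + b * y i j) z = a * B x z + b * B y z) \<and>
     (\<forall>x \<in> wt_space ns. \<forall>y \<in> wt_space ns. B x y = B y x) \<and>
     (\<forall>x \<in> wt_space ns. x \<noteq> (\<lambda>i j. 0) \<longrightarrow> B x x > 0) \<and>
     (\<forall>\<sigma> \<in> weyl ns. \<forall>x \<in> wt_space ns. \<forall>y \<in> wt_space ns.
        B (weyl_act ns \<sigma> x) (weyl_act ns \<sigma> y) = B x y)"

definition real_span :: "(nat \<Rightarrow> nat \<Rightarrow> real) set \<Rightarrow> (nat \<Rightarrow> nat \<Rightarrow> real) set" where
  "real_span S = {x. \<exists>T a. finite T \<and> T \<subseteq> S \<and> x = (\<lambda>i j. \<Sum>t\<in>T. a t * t i j)}"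

definition max_weights :: "nat list \<Rightarrow> nat \<Rightarrow> ((nat \<Rightarrow> complex mat) \<Rightarrow> complex mat)
      \<Rightarrow> ((nat \<Rightarrow> nat \<Rightarrow> real) \<Rightarrow> (nat \<Rightarrow> nat \<Rightarrow> real) \<Rightarrow> real) \<Rightarrow> (nat \<Rightarrow> nat \<Rightarrow> real) set" where
  "max_weights ns d \<rho> B = {c \<in> weights ns d \<rho>. \<forall>c' \<in> weights ns d \<rho>. B c' c' \<le> B c c}"

end

theory Submission
  imports Defs "Jordan_Normal_Form.Char_Poly"
begin


definition iter :: "'a::semiring_0 mat \<Rightarrow> nat \<Rightarrow> 'a vec \<Rightarrow> 'a vec" where
  "iter g k v = (((*\<^sub>v) g) ^^ k) v"

lemma iter_0[simp]: "iter g 0 v = v" by (simp add: iter_def)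
lemma iter_Suc[simp]: "iter g (Suc k) v = g *\<^sub>v iter g k v" by (simp add: iter_def)
lemma iter_Suc2: "iter g (Suc k) v = iter g k (g *\<^sub>v v)"
  unfolding iter_def by (simp only: funpow_Suc_right comp_def)

lemma iter_carrier[simp]: "g \<in> carrier_mat d d \<Longrightarrow> v \<in> carrier_vec d \<Longrightarrow> iter g k v \<in> carrier_vec d"
  by (induction k) auto

lemma mat_vec_zero[simp]: "A \<in> carrier_mat n m \<Longrightarrow> A *\<^sub>v 0\<^sub>v m = (0\<^sub>v n :: 'a::semiring_0 vec)"
  by (intro eq_vecI) (auto simp: scalar_prod_def)

lemma smult_zero_vec'[simp]: "c \<cdot>\<^sub>v 0\<^sub>v n = (0\<^sub>v n :: 'a::semiring_0 vec)"
  by (intro eq_vecI) auto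

lemma iter_zero: "g \<in> carrier_mat d d \<Longrightarrow> iter g k (0\<^sub>v d) = 0\<^sub>v d"
  by (induction k) auto

lemma finite_eigs:
  fixes M :: "complex mat"
  assumes "M \<in> carrier_mat d d"
  shows "finite {\<mu>. \<exists>v\<in>carrier_vec d. v \<noteq> 0\<^sub>v d \<and> M *\<^sub>v v = \<mu> \<cdot>\<^sub>v v}"
proof -
  have "{\<mu>. \<exists>v\<in>carrier_vec d. v \<noteq> 0\<^sub>v d \<and> M *\<^sub>v v = \<mu> \<cdot>\<^sub>v v} \<subseteq> {x. poly (char_poly M) x = 0}"
    using assms eigenvalue_root_char_poly[OF assms]
    by (auto simp: eigenvalue_def eigenvector_def)
  moreover have "char_poly M \<noteq> 0"
    using degree_monic_char_poly[OF assms] by auto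
  ultimately show ?thesis using poly_roots_finite finite_subset by blast
qed

lemma smult_nonzero:
  fixes x :: "complex vec"
  assumes "x \<in> carrier_vec d" "x \<noteq> 0\<^sub>v d" "c \<cdot>\<^sub>v x = 0\<^sub>v d"
  shows "c = 0"
proof (rule ccontr)
  assume "c \<noteq> 0"
  from assms(1,2) obtain i where i: "i < d" "x $ i \<noteq> 0"
    by (metis carrier_vecD eq_vecI index_zero_vec(1,2))
  have "(c \<cdot>\<^sub>v x) $ i = 0" using assms(3) i by simp
  then show False using i \<open>c \<noteq> 0\<close> assms(1) by auto
qed

locale sl2 =
  fixes d :: nat and e f h :: "complex mat"
  assumes ce: "e \<in> carrier_mat d d" and cf: "f \<in> carrier_mat d d" and ch: "h \<in> carrier_mat d d"
  and he: "\<And>u. u \<in> carrier_vec d \<Longrightarrow> h *\<^sub>v (e *\<^sub>v u) = e *\<^sub>v (h *\<^sub>v u) + 2 \<cdot>\<^sub>v (e *\<^sub>v u)"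
  and hf: "\<And>u. u \<in> carrier_vec d \<Longrightarrow> h *\<^sub>v (f *\<^sub>v u) = f *\<^sub>v (h *\<^sub>v u) - 2 \<cdot>\<^sub>v (f *\<^sub>v u)"
  and ef: "\<And>u. u \<in> carrier_vec d \<Longrightarrow> e *\<^sub>v (f *\<^sub>v u) = f *\<^sub>v (e *\<^sub>v u) + h *\<^sub>v u"
begin

lemma h_iter_e:
  assumes "u \<in> carrier_vec d" "h *\<^sub>v u = \<mu> \<cdot>\<^sub>v u"
  shows "h *\<^sub>v iter e k u = (\<mu> + 2 * of_nat k) \<cdot>\<^sub>v iter e k u"
proof (induction k)
  case 0 then show ?case using assms by simp
next
  case (Suc k)
  have c: "iter e k u \<in> carrier_vec d" using assms ce by simp
  have "h *\<^sub>v iter e (Suc k) u = e *\<^sub>v ((\<mu> + 2 * of_nat k) \<cdot>\<^sub>v iter e k u) + 2 \<cdot>\<^sub>v (e *\<^sub>v iter e k u)"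
    using he[OF c] Suc by simp
  also have "\<dots> = (\<mu> + 2 * of_nat (Suc k)) \<cdot>\<^sub>v iter e (Suc k) u"
    using c ce by (subst mult_mat_vec[OF ce c]) (auto intro!: eq_vecI simp: algebra_simps)
  finally show ?case .
qed

lemma h_iter_f:
  assumes "u \<in> carrier_vec d" "h *\<^sub>v u = \<mu> \<cdot>\<^sub>v u"
  shows "h *\<^sub>v iter f k u = (\<mu> - 2 * of_nat k) \<cdot>\<^sub>v iter f k u"
proof (induction k)
  case 0 then show ?case using assms by simp
next
  case (Suc k)
  have c: "iter f k u \<in> carrier_vec d" using assms cf by simp
  have "h *\<^sub>v iter f (Suc k) u = f *\<^sub>v ((\<mu> - 2 * of_nat k) \<cdot>\<^sub>v iter f k u) - 2 \<cdot>\<^sub>v (f *\<^sub>v iter f k u)"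
    using hf[OF c] Suc by simp
  also have "\<dots> = (\<mu> - 2 * of_nat (Suc k)) \<cdot>\<^sub>v iter f (Suc k) u"
    using c cf by (subst mult_mat_vec[OF cf c]) (auto intro!: eq_vecI simp: algebra_simps)
  finally show ?case .
qed

lemma e_iter_f:
  assumes u: "u \<in> carrier_vec d" and hu: "h *\<^sub>v u = \<mu> \<cdot>\<^sub>v u"
  shows "e *\<^sub>v iter f (Suc k) u = iter f (Suc k) (e *\<^sub>v u) + (of_nat (Suc k) * (\<mu> - of_nat k)) \<cdot>\<^sub>v iter f k u"
proof (induction k)
  case 0 then show ?case using ef[OF u] hu by simp
next
  case (Suc k)
  have c: "iter f k u \<in> carrier_vec d" "iter f (Suc k) u \<in> carrier_vec d"
     "iter f (Suc k) (e *\<^sub>v u) \<in> carrier_vec d" using u cf ce by auto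
  have "e *\<^sub>v iter f (Suc (Suc k)) u = f *\<^sub>v (e *\<^sub>v iter f (Suc k) u) + h *\<^sub>v iter f (Suc k) u"
    using ef[OF c(2)] by simp
  also have "\<dots> = f *\<^sub>v (iter f (Suc k) (e *\<^sub>v u) + (of_nat (Suc k) * (\<mu> - of_nat k)) \<cdot>\<^sub>v iter f k u)
      + (\<mu> - 2 * of_nat (Suc k)) \<cdot>\<^sub>v iter f (Suc k) u"
    using Suc h_iter_f[OF u hu, of "Suc k"] by (simp del: iter_Suc)
  also have "\<dots> = iter f (Suc (Suc k)) (e *\<^sub>v u) + (of_nat (Suc (Suc k)) * (\<mu> - of_nat (Suc k))) \<cdot>\<^sub>v iter f (Suc k) u"
    using c cf
    by (subst mult_add_distrib_mat_vec[OF cf], auto, subst mult_mat_vec[OF cf], auto intro!: eq_vecI simp: algebra_simps)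
  finally show ?case .
qed

lemma e_vanish:
  assumes u: "u \<in> carrier_vec d" and hu: "h *\<^sub>v u = \<mu> \<cdot>\<^sub>v u"
  shows "\<exists>j. iter e j u = 0\<^sub>v d"
proof (rule ccontr)
  assume "\<not> ?thesis"
  then have nz: "\<And>j. iter e j u \<noteq> 0\<^sub>v d" by blast
  let ?S = "{\<nu>. \<exists>v\<in>carrier_vec d. v \<noteq> 0\<^sub>v d \<and> h *\<^sub>v v = \<nu> \<cdot>\<^sub>v v}"
  have "range (\<lambda>j::nat. \<mu> + 2 * of_nat j) \<subseteq> ?S"
    using nz h_iter_e[OF u hu] u ce by fastforce
  moreover have "inj (\<lambda>j::nat. \<mu> + 2 * of_nat j)" by (auto intro: injI)
  ultimately have "finite (UNIV :: nat set)"
    using finite_eigs[OF ch] finite_subset finite_imageD by blast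
  then show False by simp
qed

lemma f_vanish:
  assumes u: "u \<in> carrier_vec d" and hu: "h *\<^sub>v u = \<mu> \<cdot>\<^sub>v u"
  shows "\<exists>j. iter f j u = 0\<^sub>v d"
proof (rule ccontr)
  assume "\<not> ?thesis"
  then have nz: "\<And>j. iter f j u \<noteq> 0\<^sub>v d" by blast
  let ?S = "{\<nu>. \<exists>v\<in>carrier_vec d. v \<noteq> 0\<^sub>v d \<and> h *\<^sub>v v = \<nu> \<cdot>\<^sub>v v}"
  have "range (\<lambda>j::nat. \<mu> - 2 * of_nat j) \<subseteq> ?S"
    using nz h_iter_f[OF u hu] u cf by fastforce
  moreover have "inj (\<lambda>j::nat. \<mu> - 2 * of_nat j)" by (auto intro: injI)
  ultimately have "finite (UNIV :: nat set)"
    using finite_eigs[OF ch] finite_subset finite_imageD by blast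
  then show False by simp
qed

lemma highest:
  assumes u: "u \<in> carrier_vec d" and nz: "u \<noteq> 0\<^sub>v d" and hu: "h *\<^sub>v u = \<mu> \<cdot>\<^sub>v u"
    and eu: "e *\<^sub>v u = 0\<^sub>v d"
  shows "\<exists>N::nat. \<mu> = of_nat N \<and> (\<forall>k\<le>N. iter f k u \<noteq> 0\<^sub>v d)"
proof -
  define N1 where "N1 = (LEAST j. iter f j u = 0\<^sub>v d)"
  have z: "iter f N1 u = 0\<^sub>v d" unfolding N1_def using f_vanish[OF u hu] by (rule LeastI_ex)
  have lt: "\<And>k. k < N1 \<Longrightarrow> iter f k u \<noteq> 0\<^sub>v d" unfolding N1_def using not_less_Least by blast
  have "N1 \<noteq> 0" using z nz by (auto)
  then obtain N where N: "N1 = Suc N" by (cases N1) auto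
  have c: "iter f N u \<in> carrier_vec d" using u cf by simp
  have "e *\<^sub>v iter f (Suc N) u = iter f (Suc N) (e *\<^sub>v u) + (of_nat (Suc N) * (\<mu> - of_nat N)) \<cdot>\<^sub>v iter f N u"
    by (rule e_iter_f[OF u hu])
  then have "(of_nat (Suc N) * (\<mu> - of_nat N)) \<cdot>\<^sub>v iter f N u = 0\<^sub>v d"
    using z N eu iter_zero[OF cf] ce c by (auto simp del: iter_Suc)
  note X = this
  have "iter f N u \<noteq> 0\<^sub>v d" using lt N by simp
  from smult_nonzero[OF c this X] have "of_nat (Suc N) * (\<mu> - of_nat N) = 0" .
  moreover have "of_nat (Suc N) \<noteq> (0::complex)" by (simp only: of_nat_eq_0_iff)
  ultimately have "\<mu> = of_nat N" by simp
  then show ?thesis using lt N by (intro exI[of _ N]) auto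
qed

lemma main_ind:
  "\<And>v \<mu>. v \<in> carrier_vec d \<Longrightarrow> v \<noteq> 0\<^sub>v d \<Longrightarrow> h *\<^sub>v v = \<mu> \<cdot>\<^sub>v v \<Longrightarrow> iter e (Suc p) v = 0\<^sub>v d \<Longrightarrow>
    \<mu> \<in> \<int> \<and> (\<forall>m::nat. \<mu> = of_nat m \<longrightarrow> iter f m v \<noteq> 0\<^sub>v d)"
proof (induction p)
  case 0
  then obtain N where "\<mu> = of_nat N" "\<forall>k\<le>N. iter f k v \<noteq> 0\<^sub>v d" using highest by auto
  then show ?case by auto
next
  case (Suc p v \<mu>)
  show ?case
  proof (cases "e *\<^sub>v v = 0\<^sub>v d")
    case True
    then obtain N where "\<mu> = of_nat N" "\<forall>k\<le>N. iter f k v \<noteq> 0\<^sub>v d" using highest Suc.prems by auto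
    then show ?thesis by auto
  next
    case False
    let ?u = "e *\<^sub>v v"
    have cu: "?u \<in> carrier_vec d" using Suc.prems ce by simp
    have hu: "h *\<^sub>v ?u = (\<mu> + 2) \<cdot>\<^sub>v ?u"
      using h_iter_e[OF Suc.prems(1,3), of 1] by simp
    have "iter e (Suc p) ?u = 0\<^sub>v d" using Suc.prems(4) by (simp only: iter_Suc2[symmetric])
    from Suc.IH[OF cu False hu this] have IH: "\<mu> + 2 \<in> \<int>"
       "\<And>m::nat. \<mu> + 2 = of_nat m \<Longrightarrow> iter f m ?u \<noteq> 0\<^sub>v d" by auto
    have "\<mu> = (\<mu> + 2) - 2" by simp
    then have "\<mu> \<in> \<int>" using IH(1) by (metis Ints_diff Ints_numeral)
    moreover have "iter f m v \<noteq> 0\<^sub>v d" if m: "\<mu> = of_nat m" for m :: nat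
    proof
      assume z: "iter f m v = 0\<^sub>v d"
      have z1: "iter f (Suc m) v = 0\<^sub>v d" using z cf by simp
      have z2: "iter f (Suc (Suc m)) v = 0\<^sub>v d" using z1 cf iter_Suc[of f "Suc m" v] by (simp del: iter_Suc)
      have "e *\<^sub>v iter f (Suc (Suc m)) v = iter f (Suc (Suc m)) ?u + (of_nat (Suc (Suc m)) * (\<mu> - of_nat (Suc m))) \<cdot>\<^sub>v iter f (Suc m) v"
        by (rule e_iter_f[OF Suc.prems(1,3)])
      then have "iter f (Suc (Suc m)) ?u = 0\<^sub>v d"
        using z1 z2 ce cf cu by (simp del: iter_Suc)
      moreover have "iter f (Suc (Suc m)) ?u \<noteq> 0\<^sub>v d" using IH(2)[of "Suc (Suc m)"] m by simp
      ultimately show False by simp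
    qed
    ultimately show ?thesis by blast
  qed
qed

theorem sl2_main:
  assumes "v \<in> carrier_vec d" "v \<noteq> 0\<^sub>v d" "h *\<^sub>v v = \<mu> \<cdot>\<^sub>v v"
  shows "\<mu> \<in> \<int> \<and> (\<forall>m::nat. \<mu> = of_nat m \<longrightarrow> iter f m v \<noteq> 0\<^sub>v d)"
proof -
  obtain j where j: "iter e j v = 0\<^sub>v d" using e_vanish assms by blast
  then have "j \<noteq> 0" using assms by auto
  then obtain p where "j = Suc p" by (cases j) auto
  then show ?thesis using main_ind assms j by blast
qed

end


definition unitm :: "nat \<Rightarrow> nat \<Rightarrow> nat \<Rightarrow> complex mat" where
  "unitm n a b = mat n n (\<lambda>(x,y). if x = a \<and> y = b then 1 else 0)"

definition hm :: "nat \<Rightarrow> nat \<Rightarrow> nat \<Rightarrow> complex mat" where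
  "hm n a b = mat n n (\<lambda>(x,y). (if x = a \<and> y = a then 1 else 0) - (if x = b \<and> y = b then 1 else 0))"

definition elt :: "nat list \<Rightarrow> nat \<Rightarrow> complex mat \<Rightarrow> (nat \<Rightarrow> complex mat)" where
  "elt ns i M = (\<lambda>j. if j = i then M else if j < length ns then 0\<^sub>m (ns!j+1) (ns!j+1) else 0\<^sub>m 0 0)"

lemma sum_delta_mult: "(\<Sum>z<(n::nat). g z * (if z = a \<and> P then 1 else 0)) = (if P \<and> a < n then g a else (0::'a::comm_ring_1))"
proof -
  have "(\<Sum>z<n. g z * (if z = a \<and> P then 1 else 0)) = (\<Sum>z<n. if z = a then (if P then g a else 0) else 0)"
    by (rule sum.cong) auto
  then show ?thesis by (simp add: sum.delta)
qed

lemma sum_delta_mult2: "(\<Sum>z<(n::nat). (if x = a \<and> z = b then 1 else 0) * g z) = (if x = a \<and> b < n then g b else (0::'a::comm_ring_1))"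
proof -
  have "(\<Sum>z<n. (if x = a \<and> z = b then 1 else 0) * g z) = (\<Sum>z<n. if z = b then (if x = a then g b else 0) else 0)"
    by (rule sum.cong) auto
  then show ?thesis by (simp add: sum.delta)
qed

lemma unit_entries: "x < n \<Longrightarrow> y < n \<Longrightarrow> unitm n a b $$ (x,y) = (if x = a \<and> y = b then 1 else 0)"
  by (simp add: unitm_def)

lemma bracket_diag_unit:
  fixes H :: "complex mat"
  assumes H: "H \<in> carrier_mat n n" "diagonal_mat H" and ab: "a < n" "b < n"
  shows "H * unitm n a b - unitm n a b * H = (H $$ (a,a) - H $$ (b,b)) \<cdot>\<^sub>m unitm n a b"
proof (rule eq_matI)
  fix x y assume xy: "x < dim_row ((H $$ (a,a) - H $$ (b,b)) \<cdot>\<^sub>m unitm n a b)"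
     "y < dim_col ((H $$ (a,a) - H $$ (b,b)) \<cdot>\<^sub>m unitm n a b)"
  then have x: "x < n" and y: "y < n" by (auto simp: unitm_def)
  have d: "\<And>x y. x < n \<Longrightarrow> y < n \<Longrightarrow> x \<noteq> y \<Longrightarrow> H $$ (x,y) = 0"
    using H unfolding diagonal_mat_def by auto
  have 1: "(H * unitm n a b) $$ (x,y) = (if y = b then H $$ (x,a) else 0)"
    using H x y ab by (simp add: unitm_def scalar_prod_def sum_delta_mult atLeast0LessThan)
  have 2: "(unitm n a b * H) $$ (x,y) = (if x = a then H $$ (b,y) else 0)"
    using H x y ab by (simp add: unitm_def scalar_prod_def sum_delta_mult2 atLeast0LessThan)
  show "(H * unitm n a b - unitm n a b * H) $$ (x, y) = ((H $$ (a,a) - H $$ (b,b)) \<cdot>\<^sub>m unitm n a b) $$ (x, y)"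
    using H x y ab 1 2 d[of x a] d[of b y] by (auto simp: unitm_def)
qed (use H in \<open>auto simp: unitm_def\<close>)

lemma bracket_units:
  assumes ab: "a < n" "b < n" "a \<noteq> b"
  shows "unitm n a b * unitm n b a - unitm n b a * unitm n a b = hm n a b"
proof (rule eq_matI)
  fix x y assume xy: "x < dim_row (hm n a b)" "y < dim_col (hm n a b)"
  then have x: "x < n" and y: "y < n" by (auto simp: hm_def)
  show "(unitm n a b * unitm n b a - unitm n b a * unitm n a b) $$ (x, y) = hm n a b $$ (x, y)"
    using x y ab by (simp add: unitm_def hm_def scalar_prod_def sum_delta_mult atLeast0LessThan)
qed (auto simp: unitm_def hm_def)

lemma zero_mult_minus: "A \<in> carrier_mat k k \<Longrightarrow> A * 0\<^sub>m k k - 0\<^sub>m k k * A = c \<cdot>\<^sub>m (0\<^sub>m k k :: complex mat)"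
  by (intro eq_matI) (auto simp: scalar_prod_def)

lemma bracket_elt:
  assumes H: "H \<in> lie_carrier ns" and i: "i < length ns"
    and U: "U \<in> carrier_mat (ns!i+1) (ns!i+1)" and c: "H i * U - U * H i = c \<cdot>\<^sub>m U"
  shows "lie_bracket H (elt ns i U) = lie_smult c (elt ns i U)"
proof (rule ext)
  fix j
  show "lie_bracket H (elt ns i U) j = lie_smult c (elt ns i U) j"
  proof (cases "j = i")
    case True then show ?thesis using c by (simp add: lie_bracket_def lie_smult_def elt_def)
  next
    case False
    show ?thesis
    proof (cases "j < length ns")
      case True
      then have "H j \<in> carrier_mat (ns!j+1) (ns!j+1)" using H by (auto simp: lie_carrier_def)
      then show ?thesis using False True zero_mult_minus by (simp add: lie_bracket_def lie_smult_def elt_def)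
    next
      case F2: False
      then have "H j = 0\<^sub>m 0 0" using H by (auto simp: lie_carrier_def)
      then show ?thesis using False F2 zero_mult_minus[of "0\<^sub>m 0 0" 0 c] by (simp add: lie_bracket_def lie_smult_def elt_def)
    qed
  qed
qed

lemma bracket_elt2:
  assumes i: "i < length ns"
    and U: "U \<in> carrier_mat (ns!i+1) (ns!i+1)" and V: "V \<in> carrier_mat (ns!i+1) (ns!i+1)"
  shows "lie_bracket (elt ns i U) (elt ns i V) = elt ns i (U * V - V * U)"
proof (rule ext)
  fix j
  show "lie_bracket (elt ns i U) (elt ns i V) j = elt ns i (U * V - V * U) j"
    using zero_mult_minus[of "0\<^sub>m (ns!j+1) (ns!j+1)" "ns!j+1" 0] zero_mult_minus[of "0\<^sub>m 0 0" 0 0]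
    by (auto simp: lie_bracket_def elt_def)
qed

lemma elt_carrier:
  assumes i: "i < length ns" and U: "U \<in> carrier_mat (ns!i+1) (ns!i+1)"
    and tr: "(\<Sum>j\<le>ns!i. U $$ (j, j)) = 0"
  shows "elt ns i U \<in> lie_carrier ns"
  using assms by (auto simp: lie_carrier_def elt_def)

lemma unit_lie:
  assumes i: "i < length ns" and ab: "a \<le> ns!i" "b \<le> ns!i" "a \<noteq> b"
  shows "elt ns i (unitm (ns!i+1) a b) \<in> lie_carrier ns"
  using ab by (intro elt_carrier[OF i]) (auto simp: unitm_def intro!: sum.neutral)

lemma hm_cartan:
  assumes i: "i < length ns" and ab: "a \<le> ns!i" "b \<le> ns!i" "a \<noteq> b"
  shows "elt ns i (hm (ns!i+1) a b) \<in> cartan ns"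
proof -
  have tr: "(\<Sum>j\<le>ns!i. hm (ns!i+1) a b $$ (j, j)) = 0"
  proof -
    have "(\<Sum>j\<le>ns!i. hm (ns!i+1) a b $$ (j, j)) = (\<Sum>j\<le>ns!i. (if j = a then 1 else 0) - (if j = b then 1 else 0))"
      by (rule sum.cong) (auto simp: hm_def)
    also have "\<dots> = 0" using ab by (simp add: sum_subtractf)
    finally show ?thesis .
  qed
  have "elt ns i (hm (ns!i+1) a b) \<in> lie_carrier ns"
    by (rule elt_carrier[OF i _ tr]) (auto simp: hm_def)
  moreover have "diagonal_mat (hm (ns!i+1) a b)" by (auto simp: diagonal_mat_def hm_def)
  ultimately show ?thesis by (auto simp: cartan_def elt_def diagonal_mat_def)
qed

lemma smult_mat_vec: "M \<in> carrier_mat n m \<Longrightarrow> u \<in> carrier_vec m \<Longrightarrow> (c \<cdot>\<^sub>m M) *\<^sub>v u = c \<cdot>\<^sub>v (M *\<^sub>v (u :: complex vec))"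
  by (intro eq_vecI) (auto simp: scalar_prod_def sum_distrib_left mult.assoc)

lemma comm_vec:
  fixes A B C :: "complex mat"
  assumes A: "A \<in> carrier_mat d d" and B: "B \<in> carrier_mat d d" and C: "C \<in> carrier_mat d d"
    and rel: "A * B - B * A = C" and u: "u \<in> carrier_vec d"
  shows "A *\<^sub>v (B *\<^sub>v u) = B *\<^sub>v (A *\<^sub>v u) + C *\<^sub>v u"
proof -
  have "C *\<^sub>v u = A *\<^sub>v (B *\<^sub>v u) - B *\<^sub>v (A *\<^sub>v u)"
    unfolding rel[symmetric] using A B u
    by (subst minus_mult_distrib_mat_vec[of _ d d]) auto
  then show ?thesis using A B C u by (intro eq_vecI) (auto dest!: arg_cong[where f="\<lambda>x. x $ _"])
qed

lemma rho_carrier: "is_rep ns d \<rho> \<Longrightarrow> X \<in> lie_carrier ns \<Longrightarrow> \<rho> X \<in> carrier_mat d d"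
  by (auto simp: is_rep_def)

lemma rho_comm_smult:
  assumes rep: "is_rep ns d \<rho>" and X: "X \<in> lie_carrier ns" and Y: "Y \<in> lie_carrier ns"
    and br: "lie_bracket X Y = lie_smult c Y" and u: "u \<in> carrier_vec d"
  shows "\<rho> X *\<^sub>v (\<rho> Y *\<^sub>v u) = \<rho> Y *\<^sub>v (\<rho> X *\<^sub>v u) + c \<cdot>\<^sub>v (\<rho> Y *\<^sub>v u)"
proof -
  have "\<rho> X * \<rho> Y - \<rho> Y * \<rho> X = c \<cdot>\<^sub>m \<rho> Y"
    using rep X Y br by (metis is_rep_def)
  from comm_vec[OF rho_carrier[OF rep X] rho_carrier[OF rep Y] _ this u] rho_carrier[OF rep Y] u
  show ?thesis by (simp add: smult_mat_vec[of _ d d])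
qed

lemma rho_comm:
  assumes rep: "is_rep ns d \<rho>" and X: "X \<in> lie_carrier ns" and Y: "Y \<in> lie_carrier ns"
    and Z: "Z \<in> lie_carrier ns"
    and br: "lie_bracket X Y = Z" and u: "u \<in> carrier_vec d"
  shows "\<rho> X *\<^sub>v (\<rho> Y *\<^sub>v u) = \<rho> Y *\<^sub>v (\<rho> X *\<^sub>v u) + \<rho> Z *\<^sub>v u"
proof -
  have "\<rho> X * \<rho> Y - \<rho> Y * \<rho> X = \<rho> Z"
    using rep X Y br by (metis is_rep_def)
  from comm_vec[OF rho_carrier[OF rep X] rho_carrier[OF rep Y] rho_carrier[OF rep Z] this u]
  show ?thesis .
qed



definition tr :: "nat \<Rightarrow> nat \<Rightarrow> nat \<Rightarrow> nat" where
  "tr a b j = (if j = a then b else if j = b then a else j)"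

definition sw :: "nat \<Rightarrow> nat \<Rightarrow> nat \<Rightarrow> (nat \<Rightarrow> nat \<Rightarrow> real) \<Rightarrow> (nat \<Rightarrow> nat \<Rightarrow> real)" where
  "sw i a b c = (\<lambda>i' j. if i' = i then c i (tr a b j) else c i' j)"

lemma sum_tr:
  fixes g w :: "nat \<Rightarrow> 'a::comm_ring_1"
  assumes ab: "a \<le> n" "b \<le> n" "a \<noteq> b"
  shows "(\<Sum>j\<le>n. g (tr a b j) * w j) = (\<Sum>j\<le>n. g j * w j) + (g b - g a) * w a + (g a - g b) * w b"
proof -
  have "(\<Sum>j\<le>n. g (tr a b j) * w j - g j * w j) = (\<Sum>j\<in>{a,b}. g (tr a b j) * w j - g j * w j)"
    using ab by (intro sum.mono_neutral_cong_right) (auto simp: tr_def)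
  also have "\<dots> = (g b - g a) * w a + (g a - g b) * w b"
    using ab by (simp add: tr_def algebra_simps)
  finally show ?thesis by (simp add: sum_subtractf algebra_simps)
qed

lemma sum_single:
  fixes G :: "nat \<Rightarrow> 'a::comm_ring_1"
  assumes "i \<in> S" "finite S" "\<And>j. j \<in> S \<Longrightarrow> j \<noteq> i \<Longrightarrow> G' j = G j"
  shows "sum G' S = sum G S + (G' i - G i)"
proof -
  have "sum G' S = G' i + sum G' (S - {i})" using assms by (simp add: sum.remove)
  moreover have "sum G S = G i + sum G (S - {i})" using assms by (simp add: sum.remove)
  moreover have "sum G' (S - {i}) = sum G (S - {i})" using assms by (intro sum.cong) auto
  ultimately show ?thesis by simp
qed

lemma wt_eval_sw:
  assumes i: "i < length ns" and ab: "a \<le> ns!i" "b \<le> ns!i" "a \<noteq> b"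
  shows "wt_eval ns (sw i a b c) H = wt_eval ns c H
     - complex_of_real (c i a - c i b) * (H i $$ (a,a) - H i $$ (b,b))"
proof -
  have "wt_eval ns (sw i a b c) H = wt_eval ns c H +
     ((\<Sum>j\<le>ns!i. complex_of_real (c i (tr a b j)) * H i $$ (j, j)) - (\<Sum>j\<le>ns!i. complex_of_real (c i j) * H i $$ (j, j)))"
    unfolding wt_eval_def using i by (subst sum_single[of i]) (auto simp: sw_def)
  also have "\<dots> = wt_eval ns c H - complex_of_real (c i a - c i b) * (H i $$ (a,a) - H i $$ (b,b))"
    using sum_tr[OF ab, of "\<lambda>j. complex_of_real (c i j)" "\<lambda>j. H i $$ (j, j)"] by (simp add: algebra_simps)
  finally show ?thesis .
qed

lemma sw_same: "sw i a a c = c" unfolding sw_def tr_def by (intro ext) auto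

lemma sw_wt_space:
  assumes c: "c \<in> wt_space ns" and i: "i < length ns" and ab: "a \<le> ns!i" "b \<le> ns!i"
  shows "sw i a b c \<in> wt_space ns"
proof (cases "a = b")
  case True then show ?thesis using c by (simp add: sw_same)
next
  case False
  have s: "(\<Sum>j\<le>ns!i. c i (tr a b j)) = (\<Sum>j\<le>ns!i. c i j)"
    using sum_tr[OF ab False, of "c i" "\<lambda>_. 1"] by simp
  have z: "sw i a b c i' j = 0" if "(i', j) \<notin> idx ns" for i' j
  proof (cases "i' = i")
    case True
    then have "j > ns!i" using that i by (auto simp: idx_def)
    then have "tr a b j = j" using ab by (auto simp: tr_def)
    then show ?thesis using True c that by (auto simp: sw_def wt_space_def)
  next
    case False then show ?thesis using c that by (auto simp: sw_def wt_space_def)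
  qed
  have "(\<Sum>j\<le>ns!i'. sw i a b c i' j) = 0" if "i' < length ns" for i'
    using s c that by (cases "i' = i") (auto simp: sw_def wt_space_def)
  then show ?thesis using z unfolding wt_space_def by auto
qed

lemma wt_eval_hm:
  assumes c: "c \<in> wt_space ns" and i: "i < length ns" and ab: "a \<le> ns!i" "b \<le> ns!i" "a \<noteq> b"
  shows "wt_eval ns c (elt ns i (hm (ns!i+1) a b)) = complex_of_real (c i a - c i b)"
proof -
  let ?G = "\<lambda>i'. \<Sum>j\<le>ns!i'. complex_of_real (c i' j) * elt ns i (hm (ns!i+1) a b) i' $$ (j, j)"
  have "wt_eval ns c (elt ns i (hm (ns!i+1) a b)) = sum ?G {..<length ns}" by (simp add: wt_eval_def)
  also have "\<dots> = sum (\<lambda>_. 0) {..<length ns} + (?G i - 0)"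
    by (rule sum_single) (use i in \<open>auto simp: elt_def\<close>)
  also have "\<dots> = (\<Sum>j\<le>ns!i. complex_of_real (c i j) * ((if j = a then 1 else 0) - (if j = b then 1 else 0)))"
    by (simp add: elt_def, rule sum.cong) (auto simp: hm_def)
  also have "\<dots> = (\<Sum>j\<le>ns!i. (if j = a then complex_of_real (c i j) else 0) - (if j = b then complex_of_real (c i j) else 0))"
    by (rule sum.cong) auto
  also have "\<dots> = complex_of_real (c i a - c i b)"
    using ab by (simp add: sum_subtractf)
  finally show ?thesis .
qed

lemma cartan_lie: "H \<in> cartan ns \<Longrightarrow> H \<in> lie_carrier ns" by (simp add: cartan_def)

lemma cartan_comp: "H \<in> cartan ns \<Longrightarrow> i < length ns \<Longrightarrow> H i \<in> carrier_mat (ns!i+1) (ns!i+1) \<and> diagonal_mat (H i)"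
  by (auto simp: cartan_def lie_carrier_def)

lemma weights_swap_le:
  assumes rep: "is_rep ns d \<rho>" and cw: "c \<in> weights ns d \<rho>" and i: "i < length ns"
    and ab: "a \<le> ns!i" "b \<le> ns!i" "a \<noteq> b" and le: "c i b \<le> c i a"
  shows "sw i a b c \<in> weights ns d \<rho>"
proof -
  define n where "n = ns!i+1"
  have an: "a < n" "b < n" using ab by (auto simp: n_def)
  define E where "E = elt ns i (unitm n a b)"
  define F where "F = elt ns i (unitm n b a)"
  define Hh where "Hh = elt ns i (hm n a b)"
  have EL: "E \<in> lie_carrier ns" unfolding E_def n_def using unit_lie[OF i ab] .
  have FL: "F \<in> lie_carrier ns" unfolding F_def n_def using unit_lie[OF i ab(2,1)] ab(3) by auto
  have HC: "Hh \<in> cartan ns" unfolding Hh_def n_def using hm_cartan[OF i ab] .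
  have HL: "Hh \<in> lie_carrier ns" using HC by (rule cartan_lie)
  have Uab: "unitm n a b \<in> carrier_mat (ns!i+1) (ns!i+1)" "unitm n b a \<in> carrier_mat (ns!i+1) (ns!i+1)"
    by (auto simp: unitm_def n_def)
  have hmC: "hm n a b \<in> carrier_mat n n" "diagonal_mat (hm n a b)"
    by (auto simp: hm_def diagonal_mat_def)
  have br1: "lie_bracket Hh E = lie_smult 2 E"
    unfolding Hh_def E_def
    apply (rule bracket_elt[OF HL[unfolded Hh_def] i Uab(1)])
    using bracket_diag_unit[OF hmC an] an ab(3) by (simp add: elt_def hm_def)
  have br2: "lie_bracket Hh F = lie_smult (-2) F"
    unfolding Hh_def F_def
    apply (rule bracket_elt[OF HL[unfolded Hh_def] i Uab(2)])
    using bracket_diag_unit[OF hmC an(2,1)] an ab(3) by (simp add: elt_def hm_def)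
  have br3: "lie_bracket E F = Hh"
    unfolding Hh_def E_def F_def using bracket_elt2[OF i Uab] bracket_units[OF an ab(3)] by simp
  define e where "e = \<rho> E"
  define f where "f = \<rho> F"
  define h where "h = \<rho> Hh"
  have cmats: "e \<in> carrier_mat d d" "f \<in> carrier_mat d d" "h \<in> carrier_mat d d"
    unfolding e_def f_def h_def using rho_carrier[OF rep] EL FL HL by auto
  interpret sl2 d e f h
  proof (unfold_locales)
    fix u :: "complex vec" assume u: "u \<in> carrier_vec d"
    show "h *\<^sub>v (e *\<^sub>v u) = e *\<^sub>v (h *\<^sub>v u) + 2 \<cdot>\<^sub>v (e *\<^sub>v u)"
      unfolding e_def h_def by (rule rho_comm_smult[OF rep HL EL br1 u])
    have "h *\<^sub>v (f *\<^sub>v u) = f *\<^sub>v (h *\<^sub>v u) + (-2) \<cdot>\<^sub>v (f *\<^sub>v u)"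
      unfolding f_def h_def by (rule rho_comm_smult[OF rep HL FL br2 u])
    then show "h *\<^sub>v (f *\<^sub>v u) = f *\<^sub>v (h *\<^sub>v u) - 2 \<cdot>\<^sub>v (f *\<^sub>v u)"
      using cmats u by (auto intro!: eq_vecI)
    show "e *\<^sub>v (f *\<^sub>v u) = f *\<^sub>v (e *\<^sub>v u) + h *\<^sub>v u"
      unfolding e_def f_def h_def by (rule rho_comm[OF rep EL FL HL br3 u])
  qed (use cmats in auto)
  from cw obtain v where v: "v \<in> carrier_vec d" "v \<noteq> 0\<^sub>v d"
    and wv: "\<And>H. H \<in> cartan ns \<Longrightarrow> \<rho> H *\<^sub>v v = wt_eval ns c H \<cdot>\<^sub>v v"
    and cW: "c \<in> wt_space ns"
    unfolding weights_def by blast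
  define r where "r = c i a - c i b"
  have hv: "h *\<^sub>v v = complex_of_real r \<cdot>\<^sub>v v"
    using wv[OF HC] wt_eval_hm[OF cW i ab] unfolding h_def Hh_def n_def r_def by simp
  from sl2_main[OF v hv] have Z: "complex_of_real r \<in> \<int>"
    and nz: "\<And>m::nat. complex_of_real r = of_nat m \<Longrightarrow> iter f m v \<noteq> 0\<^sub>v d" by auto
  from Z obtain z where "complex_of_real r = of_int z" by (auto elim: Ints_cases)
  then have rz: "r = of_int z" by (metis of_real_eq_iff of_real_of_int_eq)
  have "z \<ge> 0" using le rz r_def by simp
  define m where "m = nat z"
  have rm: "r = of_nat m" using rz \<open>z \<ge> 0\<close> by (simp add: m_def)
  have nzm: "iter f m v \<noteq> 0\<^sub>v d" using nz[of m] rm by simp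
  have propag: "\<rho> H *\<^sub>v iter f k v = (wt_eval ns c H - of_nat k * (H i $$ (a,a) - H i $$ (b,b))) \<cdot>\<^sub>v iter f k v"
    if HC': "H \<in> cartan ns" for H k
  proof (induction k)
    case 0 then show ?case using wv[OF HC'] by simp
  next
    case (Suc k)
    have HL': "H \<in> lie_carrier ns" using HC' by (rule cartan_lie)
    have Hi: "H i \<in> carrier_mat n n" "diagonal_mat (H i)" using cartan_comp[OF HC' i] by (auto simp: n_def)
    have brH: "lie_bracket H F = lie_smult (-(H i $$ (a,a) - H i $$ (b,b))) F"
      unfolding F_def
      by (rule bracket_elt[OF HL' i Uab(2)]) (use bracket_diag_unit[OF Hi an(2,1)] in simp)
    have cv: "iter f k v \<in> carrier_vec d" using v cmats by simp
    have cH: "\<rho> H \<in> carrier_mat d d" using rho_carrier[OF rep HL'] .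
    have "\<rho> H *\<^sub>v iter f (Suc k) v = f *\<^sub>v (\<rho> H *\<^sub>v iter f k v) + (-(H i $$ (a,a) - H i $$ (b,b))) \<cdot>\<^sub>v (f *\<^sub>v iter f k v)"
      unfolding f_def iter_Suc using rho_comm_smult[OF rep HL' FL brH cv[unfolded f_def]] by simp
    also have "\<dots> = (wt_eval ns c H - of_nat (Suc k) * (H i $$ (a,a) - H i $$ (b,b))) \<cdot>\<^sub>v iter f (Suc k) v"
      unfolding Suc using cv cmats by (subst mult_mat_vec[OF cmats(2) cv]) (auto intro!: eq_vecI simp: algebra_simps)
    finally show ?case .
  qed
  show ?thesis unfolding weights_def
  proof (intro CollectI conjI bexI[of _ "iter f m v"] ballI)
    show "sw i a b c \<in> wt_space ns" using sw_wt_space[OF cW i ab(1,2)] .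
    show "iter f m v \<noteq> 0\<^sub>v d" by (rule nzm)
    show "iter f m v \<in> carrier_vec d" using v cmats by simp
    fix H assume HC': "H \<in> cartan ns"
    show "\<rho> H *\<^sub>v iter f m v = wt_eval ns (sw i a b c) H \<cdot>\<^sub>v iter f m v"
      using propag[OF HC', of m] wt_eval_sw[OF i ab, of c H] rm unfolding r_def by simp
  qed
qed

lemma weights_swap:
  assumes rep: "is_rep ns d \<rho>" and cw: "c \<in> weights ns d \<rho>" and i: "i < length ns"
    and ab: "a \<le> ns!i" "b \<le> ns!i"
  shows "sw i a b c \<in> weights ns d \<rho>"
proof (cases "a = b")
  case True then show ?thesis using cw by (simp add: sw_same)
next
  case False
  have "sw i a b c = sw i b a c" unfolding sw_def tr_def by (intro ext) auto
  then show ?thesis using weights_swap_le[OF rep cw i ab False] weights_swap_le[OF rep cw i ab(2,1)] False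
    by (cases "c i b \<le> c i a") auto
qed



definition closed_sw :: "nat list \<Rightarrow> (nat \<Rightarrow> nat \<Rightarrow> real) set \<Rightarrow> bool" where
  "closed_sw ns W \<longleftrightarrow> (\<forall>x\<in>W. \<forall>i<length ns. \<forall>a\<le>ns!i. \<forall>b\<le>ns!i. sw i a b x \<in> W)"

definition nzc :: "nat list \<Rightarrow> nat \<Rightarrow> (nat \<Rightarrow> nat \<Rightarrow> real) \<Rightarrow> bool" where
  "nzc ns i x \<longleftrightarrow> (\<exists>j\<le>ns!i. x i j \<noteq> 0)"

definition zp :: "nat \<Rightarrow> (nat \<Rightarrow> nat \<Rightarrow> real) \<Rightarrow> (nat \<Rightarrow> nat \<Rightarrow> real)" where
  "zp i x = (\<lambda>i' t. if i' = i then 0 else x i' t)"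

lemma fiber_sum:
  assumes "finite W"
  shows "card W = (\<Sum>y\<in>g ` W. card {x\<in>W. g x = y})"
proof -
  have "W = (\<Union>y\<in>g ` W. {x\<in>W. g x = y})" by auto
  then have "card W = card (\<Union>y\<in>g ` W. {x\<in>W. g x = y})" by simp
  also have "\<dots> = (\<Sum>y\<in>g ` W. card {x\<in>W. g x = y})"
    using assms by (intro card_UN_disjoint) auto
  finally show ?thesis .
qed

lemma fiber_ge1:
  assumes "finite W" "y \<in> g ` W"
  shows "1 \<le> card {x\<in>W. g x = y}"
proof -
  from assms obtain x where "x \<in> W" "g x = y" by auto
  then have "{x\<in>W. g x = y} \<noteq> {}" by auto
  then show ?thesis using assms(1) by (simp add: Suc_le_eq card_gt_0_iff)
qed

lemma fiber_one:
  assumes fin: "finite W" and y: "y \<in> g ` W"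
  shows "card (g ` W) - 1 + card {x\<in>W. g x = y} \<le> card W"
proof -
  let ?F = "\<lambda>y. card {x\<in>W. g x = y}"
  have "card W = ?F y + (\<Sum>z\<in>g ` W - {y}. ?F z)"
    using fiber_sum[OF fin, of g] y fin by (simp add: sum.remove)
  moreover have "card (g ` W - {y}) \<le> (\<Sum>z\<in>g ` W - {y}. ?F z)"
  proof -
    have "card (g ` W - {y}) = (\<Sum>z\<in>g ` W - {y}. (1::nat))" by simp
    also have "\<dots> \<le> (\<Sum>z\<in>g ` W - {y}. ?F z)" by (intro sum_mono fiber_ge1[OF fin]) auto
    finally show ?thesis .
  qed
  moreover have "card (g ` W - {y}) = card (g ` W) - 1" using y fin by simp
  ultimately show ?thesis by linarith
qed

lemma fiber_two:
  assumes fin: "finite W" and y: "y1 \<in> g ` W" "y2 \<in> g ` W" "y1 \<noteq> y2"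
  shows "card (g ` W) - 2 + card {x\<in>W. g x = y1} + card {x\<in>W. g x = y2} \<le> card W"
proof -
  let ?F = "\<lambda>y. card {x\<in>W. g x = y}"
  have "card W = ?F y1 + (\<Sum>z\<in>g ` W - {y1}. ?F z)"
    using fiber_sum[OF fin, of g] y fin by (simp add: sum.remove)
  moreover have "(\<Sum>z\<in>g ` W - {y1}. ?F z) = ?F y2 + (\<Sum>z\<in>g ` W - {y1} - {y2}. ?F z)"
    using y fin by (subst sum.remove[of _ y2]) auto
  moreover have "card (g ` W - {y1} - {y2}) \<le> (\<Sum>z\<in>g ` W - {y1} - {y2}. ?F z)"
  proof -
    have "card (g ` W - {y1} - {y2}) = (\<Sum>z\<in>g ` W - {y1} - {y2}. (1::nat))" by simp
    also have "\<dots> \<le> (\<Sum>z\<in>g ` W - {y1} - {y2}. ?F z)" by (intro sum_mono fiber_ge1[OF fin]) auto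
    finally show ?thesis .
  qed
  moreover have "card (g ` W - {y1} - {y2}) = card (g ` W) - 2" using y fin by simp
  ultimately show ?thesis by linarith
qed

lemma wt_sum0: "x \<in> wt_space ns \<Longrightarrow> i < length ns \<Longrightarrow> (\<Sum>j\<le>ns!i. x i j) = 0"
  unfolding wt_space_def by blast

lemma nonconst:
  assumes x: "x \<in> wt_space ns" and j: "j < length ns" and nz: "nzc ns j x"
  shows "\<exists>a\<le>ns!j. \<exists>b\<le>ns!j. x j a \<noteq> x j b"
proof (rule ccontr)
  assume H: "\<not> ?thesis"
  from nz obtain a where a: "a \<le> ns!j" "x j a \<noteq> 0" unfolding nzc_def by blast
  have c: "x j b = x j a" if "b \<le> ns!j" for b using H a(1) that by blast
  have "(\<Sum>b\<le>ns!j. x j b) = (\<Sum>b\<le>ns!j. x j a)" by (rule sum.cong[OF refl]) (rule c, simp)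
  then have "(\<Sum>b\<le>ns!j. x j b) = real (Suc (ns!j)) * x j a" by simp
  moreover have "(\<Sum>b\<le>ns!j. x j b) = 0" using wt_sum0[OF x j] .
  ultimately show False using a(2) by simp
qed

lemma closedD: "closed_sw ns W \<Longrightarrow> x \<in> W \<Longrightarrow> i < length ns \<Longrightarrow> a \<le> ns!i \<Longrightarrow> b \<le> ns!i \<Longrightarrow> sw i a b x \<in> W"
  unfolding closed_sw_def by blast

lemma sw_at: "sw j a b x j t = x j (tr a b t)" by (simp add: sw_def)

lemma prod_ge: "1 \<le> (p::nat) \<Longrightarrow> 1 \<le> q \<Longrightarrow> p + q \<le> p * q + 1"
  by (cases p; cases q) auto

lemma swap_count:
  assumes W: "W \<subseteq> wt_space ns" and cl: "closed_sw ns W" and x: "x \<in> W" and fin: "finite W"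
    and j: "j < length ns" and nz: "nzc ns j x"
  shows "ns!j + 1 \<le> card {z\<in>W. zp j z = zp j x \<and> nzc ns j z}"
proof -
  have xw: "x \<in> wt_space ns" using W x by blast
  obtain a0 b0 where ab0: "a0 \<le> ns!j" "b0 \<le> ns!j" "x j a0 \<noteq> x j b0"
    using nonconst[OF xw j nz] by blast
  define \<alpha> where "\<alpha> = x j a0"
  define A where "A = {a. a \<le> ns!j \<and> x j a = \<alpha>}"
  define Bs where "Bs = {b. b \<le> ns!j \<and> x j b \<noteq> \<alpha>}"
  define S where "S = {z\<in>W. zp j z = zp j x \<and> nzc ns j z}"
  define \<phi> where "\<phi> = (\<lambda>p. sw j (fst p) (snd p) x)"
  have inA: "a \<le> ns!j" "x j a = \<alpha>" if "a \<in> A" for a using that unfolding A_def by auto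
  have inB: "b \<le> ns!j" "x j b \<noteq> \<alpha>" if "b \<in> Bs" for b using that unfolding Bs_def by auto
  have fA: "finite A" "finite Bs" unfolding A_def Bs_def by auto
  have A0: "a0 \<in> A" unfolding A_def \<alpha>_def using ab0 by simp
  have B0: "b0 \<in> Bs" unfolding Bs_def \<alpha>_def using ab0 by simp
  have AB1: "A \<union> Bs = {..ns!j}" unfolding A_def Bs_def by auto
  have AB2: "A \<inter> Bs = {}" unfolding A_def Bs_def by auto
  have "card (A \<union> Bs) = card A + card Bs" by (rule card_Un_disjoint[OF fA(1) fA(2) AB2])
  then have cAB: "card A + card Bs = ns!j + 1" using AB1 by simp
  have sub: "\<phi> ` (A \<times> Bs) \<subseteq> S"
  proof
    fix z assume "z \<in> \<phi> ` (A \<times> Bs)"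
    then obtain a b where a: "a \<in> A" and b: "b \<in> Bs" and zd: "z = sw j a b x" unfolding \<phi>_def by auto
    have "z \<in> W" unfolding zd by (rule closedD[OF cl x j inA(1)[OF a] inB(1)[OF b]])
    moreover have "zp j z = zp j x" unfolding zd zp_def sw_def by (intro ext) simp
    moreover have "nzc ns j z"
    proof (rule ccontr)
      assume "\<not> nzc ns j z"
      then have "z j a = 0" "z j b = 0" using inA(1)[OF a] inB(1)[OF b] unfolding nzc_def by auto
      moreover have "z j a = x j b" unfolding zd sw_at tr_def by simp
      moreover have "z j b = x j a" unfolding zd sw_at tr_def by simp
      ultimately show False using inA(2)[OF a] inB(2)[OF b] by simp
    qed
    ultimately show "z \<in> S" unfolding S_def by blast
  qed
  have xS: "x \<in> S" using x nz unfolding S_def by blast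
  have xn: "x \<notin> \<phi> ` (A \<times> Bs)"
  proof
    assume "x \<in> \<phi> ` (A \<times> Bs)"
    then obtain a b where a: "a \<in> A" and b: "b \<in> Bs" and xd: "x = sw j a b x" unfolding \<phi>_def by auto
    have "x j a = sw j a b x j a" using arg_cong[OF xd, of "\<lambda>f. f j a"] by simp
    also have "\<dots> = x j b" unfolding sw_at tr_def by simp
    finally show False using inA(2)[OF a] inB(2)[OF b] by simp
  qed
  have inj: "inj_on \<phi> (A \<times> Bs)"
  proof (rule inj_onI)
    fix p q assume p: "p \<in> A \<times> Bs" and q: "q \<in> A \<times> Bs" and e: "\<phi> p = \<phi> q"
    define a where "a = fst p"
    define b where "b = snd p"
    define a' where "a' = fst q"
    define b' where "b' = snd q"
    have a: "a \<in> A" and b: "b \<in> Bs" and a': "a' \<in> A" and b': "b' \<in> Bs"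
      using p q unfolding a_def b_def a'_def b'_def by auto
    have ea: "sw j a b x = sw j a' b' x" using e unfolding \<phi>_def a_def b_def a'_def b'_def .
    have e1: "x j b = x j (tr a' b' a)"
    proof -
      have "sw j a b x j a = sw j a' b' x j a" using ea by simp
      then show ?thesis unfolding sw_at tr_def by simp
    qed
    have aa: "a = a'"
    proof (rule ccontr)
      assume ne: "a \<noteq> a'"
      show False
      proof (cases "a = b'")
        case True
        then show False using inA(2)[OF a] inB(2)[OF b'] by simp
      next
        case False
        then have "tr a' b' a = a" using ne unfolding tr_def by simp
        then show False using e1 inA(2)[OF a] inB(2)[OF b] by simp
      qed
    qed
    have e2: "x j a = x j (tr a' b' b)"
    proof -
      have "sw j a b x j b = sw j a' b' x j b" using ea by simp
      moreover have "b \<noteq> a" using inA(2)[OF a] inB(2)[OF b] by auto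
      ultimately show ?thesis unfolding sw_at tr_def by simp
    qed
    have bb: "b = b'"
    proof (rule ccontr)
      assume ne: "b \<noteq> b'"
      have "b \<noteq> a'" using inA(2)[OF a'] inB(2)[OF b] by auto
      then have "tr a' b' b = b" using ne unfolding tr_def by simp
      then show False using e2 inA(2)[OF a] inB(2)[OF b] by simp
    qed
    show "p = q" using aa bb unfolding a_def b_def a'_def b'_def by (simp add: prod_eq_iff)
  qed
  have fS: "finite S" using fin unfolding S_def by simp
  have "card (insert x (\<phi> ` (A \<times> Bs))) \<le> card S" using sub xS fS by (intro card_mono) auto
  moreover have "card (insert x (\<phi> ` (A \<times> Bs))) = Suc (card (\<phi> ` (A \<times> Bs)))"
    using xn fA by (intro card_insert_disjoint) auto
  moreover have "card (\<phi> ` (A \<times> Bs)) = card A * card Bs"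
    using inj by (simp add: card_image card_cartesian_product)
  moreover have "card A * card Bs + 1 \<ge> card A + card Bs"
  proof -
    have "A \<noteq> {}" "Bs \<noteq> {}" using A0 B0 by blast+
    then have "card A \<ge> 1" "card Bs \<ge> 1" using fA by (simp_all add: Suc_le_eq card_gt_0_iff)
    then show ?thesis using prod_ge by fastforce
  qed
  ultimately show ?thesis using cAB unfolding S_def by linarith
qed


lemma wt_spaceI: "(\<And>i j. (i,j) \<notin> idx ns \<Longrightarrow> c i j = 0) \<Longrightarrow> (\<And>i. i < length ns \<Longrightarrow> (\<Sum>j\<le>ns!i. c i j) = 0) \<Longrightarrow> c \<in> wt_space ns"
  unfolding wt_space_def by blast

lemma wt_zero: "c \<in> wt_space ns \<Longrightarrow> (i,j) \<notin> idx ns \<Longrightarrow> c i j = 0"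
  unfolding wt_space_def by blast

lemma zp_wt: assumes x: "x \<in> wt_space ns" shows "zp j x \<in> wt_space ns"
proof (rule wt_spaceI)
  fix i t assume "(i,t) \<notin> idx ns"
  then show "zp j x i t = 0" using wt_zero[OF x] by (simp add: zp_def)
next
  fix i assume i: "i < length ns"
  show "(\<Sum>t\<le>ns!i. zp j x i t) = 0"
  proof (cases "i = j")
    case True then show ?thesis by (simp add: zp_def)
  next
    case False then show ?thesis using wt_sum0[OF x i] by (simp add: zp_def)
  qed
qed

lemma zp_sw: "i \<noteq> j \<Longrightarrow> zp j (sw i a b x) = sw i a b (zp j x)"
  unfolding zp_def sw_def by (intro ext) auto

lemma sw_zp_same: "sw j a b (zp j x) = zp j x"
  unfolding zp_def sw_def by (intro ext) auto

lemma zp_closed: assumes cl: "closed_sw ns W" shows "closed_sw ns (zp j ` W)"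
  unfolding closed_sw_def
proof (intro ballI allI impI)
  fix y i a b assume y: "y \<in> zp j ` W" and i: "i < length ns" and ab: "a \<le> ns!i" "b \<le> ns!i"
  then obtain x where x: "x \<in> W" "y = zp j x" by auto
  show "sw i a b y \<in> zp j ` W"
  proof (cases "i = j")
    case True then show ?thesis using x y by (simp add: sw_zp_same)
  next
    case False
    have "sw i a b x \<in> W" using cl x i ab by (auto simp: closed_sw_def)
    moreover have "sw i a b y = zp j (sw i a b x)" using zp_sw[OF False, of a b x] x by simp
    ultimately show ?thesis by (simp add: rev_image_eqI)
  qed
qed

lemma nzc_zp: "i \<noteq> j \<Longrightarrow> nzc ns i (zp j x) = nzc ns i x"
  by (simp add: nzc_def zp_def)

lemma nzc_sw: "i \<noteq> j \<Longrightarrow> nzc ns j (sw i a b x) = nzc ns j x"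
  by (simp add: nzc_def sw_def)

lemma const_zero:
  assumes y: "y \<in> wt_space ns" and i: "i < length ns"
    and c: "\<And>a b. a \<le> ns!i \<Longrightarrow> b \<le> ns!i \<Longrightarrow> y i a = y i b"
  shows "\<not> nzc ns i y"
proof
  assume "nzc ns i y"
  then have "\<exists>a\<le>ns!i. \<exists>b\<le>ns!i. y i a \<noteq> y i b" by (rule nonconst[OF y i])
  then show False using c by blast
qed

lemma ob_le: "of_bool b \<le> (1::nat)" by (cases b) auto

lemma count_main:
  assumes "finite I"
  shows "\<And>W. I \<subseteq> {..<length ns} \<Longrightarrow> (\<forall>n\<in>set ns. n \<ge> 1) \<Longrightarrow> finite W \<Longrightarrow> W \<noteq> {} \<Longrightarrow>
    W \<subseteq> wt_space ns \<Longrightarrow> closed_sw ns W \<Longrightarrow> (\<forall>i\<in>I. \<exists>x\<in>W. nzc ns i x) \<Longrightarrow>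
    (\<Sum>i\<in>I. ns!i) + 1 + of_bool (card I \<ge> 2 \<or> (I \<noteq> {} \<and> (\<exists>x\<in>W. \<forall>i\<in>I. \<not> nzc ns i x))) \<le> card W"
  using assms
proof (induction I rule: finite_induct)
  case empty
  then have "card W \<ge> 1" by (simp add: Suc_le_eq card_gt_0_iff)
  then show ?case by simp
next
  case (insert j I')
  note W = insert.prems
  have j: "j < length ns" using W(1) by auto
  have nj: "ns!j \<ge> 1" using W(2) j by auto
  define P where "P = zp j ` W"
  have fP: "finite P" "P \<noteq> {}" using W(3,4) by (auto simp: P_def)
  have Pw: "P \<subseteq> wt_space ns" using W(5) zp_wt by (auto simp: P_def)
  have Pc: "closed_sw ns P" using zp_closed[OF W(6)] by (simp add: P_def)
  have Pcov: "\<forall>i\<in>I'. \<exists>x\<in>P. nzc ns i x"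
  proof
    fix i assume "i \<in> I'"
    then have "i \<noteq> j" using insert.hyps by auto
    from W(7) \<open>i \<in> I'\<close> obtain x where "x \<in> W" "nzc ns i x" by auto
    then show "\<exists>x\<in>P. nzc ns i x" using nzc_zp[OF \<open>i \<noteq> j\<close>] by (auto simp: P_def)
  qed
  have I'sub: "I' \<subseteq> {..<length ns}" using W(1) by auto
  note IH = insert.IH[OF I'sub W(2) fP Pw Pc Pcov]
  have IH1: "(\<Sum>i\<in>I'. ns!i) + 1 \<le> card P" using IH by linarith
  have sumI: "(\<Sum>i\<in>insert j I'. ns!i) = ns!j + (\<Sum>i\<in>I'. ns!i)" using insert.hyps by simp
  let ?Fb = "\<lambda>y. {x\<in>W. zp j x = y}"
  let ?b = "card (insert j I') \<ge> 2 \<or> (insert j I' \<noteq> {} \<and> (\<exists>x\<in>W. \<forall>i\<in>insert j I'. \<not> nzc ns i x))"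
  have Tle: "(\<Sum>i\<in>insert j I'. ns!i) + 1 + of_bool ?b \<le> (\<Sum>i\<in>I'. ns!i) + ns!j + 2"
    using sumI ob_le[of ?b] by linarith
  from W(7) obtain x0 where x0: "x0 \<in> W" "nzc ns j x0" by auto
  define y0 where "y0 = zp j x0"
  have fbig: "ns!j + 1 \<le> card (?Fb (zp j x))" if "x \<in> W" "nzc ns j x" for x
  proof -
    have "ns!j + 1 \<le> card {z\<in>W. zp j z = zp j x \<and> nzc ns j z}"
      by (rule swap_count[OF W(5) W(6) that(1) W(3) j that(2)])
    also have "\<dots> \<le> card (?Fb (zp j x))" using W(3) by (intro card_mono) auto
    finally show ?thesis .
  qed
  show ?case
  proof (cases "\<exists>x1\<in>W. nzc ns j x1 \<and> zp j x1 \<noteq> y0")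
    case True
    then obtain x1 where x1: "x1 \<in> W" "nzc ns j x1" "zp j x1 \<noteq> y0" by auto
    have y0im: "y0 \<in> zp j ` W" "zp j x1 \<in> zp j ` W" using x0 x1 by (auto simp: y0_def)
    have "card (zp j ` W) - 2 + card (?Fb y0) + card (?Fb (zp j x1)) \<le> card W"
      by (rule fiber_two[OF W(3) y0im x1(3)[symmetric]])
    moreover have "card (?Fb y0) \<ge> ns!j + 1" using fbig[OF x0] by (simp add: y0_def)
    moreover have "card (?Fb (zp j x1)) \<ge> ns!j + 1" using fbig[OF x1(1,2)] .
    moreover have "card P \<ge> 2"
    proof -
      have "{y0, zp j x1} \<subseteq> P" using y0im by (auto simp: P_def)
      then have "card {y0, zp j x1} \<le> card P" using fP by (intro card_mono) auto
      then show ?thesis using x1(3) by simp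
    qed
    ultimately show ?thesis using Tle nj IH1 unfolding P_def by linarith
  next
    case False
    then have only: "\<And>x1. x1 \<in> W \<Longrightarrow> nzc ns j x1 \<Longrightarrow> zp j x1 = y0" by auto
    have y0im: "y0 \<in> zp j ` W" using x0 by (auto simp: y0_def)
    have f1: "card P - 1 + card (?Fb y0) \<le> card W"
      using fiber_one[OF W(3) y0im] unfolding P_def .
    have fb0: "card (?Fb y0) \<ge> ns!j + 1" using fbig[OF x0] by (simp add: y0_def)
    have y0P: "y0 \<in> P" using y0im by (simp add: P_def)
    show ?thesis
    proof (cases "I' = {}")
      case False
      have "\<not> nzc ns i y0" if iI: "i \<in> I'" for i
      proof -
        have ij: "i \<noteq> j" using iI insert.hyps by auto
        have i: "i < length ns" using iI W(1) by auto
        have "y0 i a = y0 i b" if ab: "a \<le> ns!i" "b \<le> ns!i" for a b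
        proof -
          have "sw i a b x0 \<in> W" using W(6) x0 i ab unfolding closed_sw_def by auto
          moreover have "nzc ns j (sw i a b x0)" using nzc_sw[OF ij] x0 by simp
          ultimately have "zp j (sw i a b x0) = y0" using only by auto
          then have "sw i a b y0 = y0" using zp_sw[OF ij] by (simp add: y0_def)
          then have "sw i a b y0 i b = y0 i b" by simp
          then show ?thesis by (simp add: sw_def tr_def split: if_splits)
        qed
        moreover have "y0 \<in> wt_space ns" using y0P Pw by auto
        ultimately show ?thesis using const_zero[OF _ i] by blast
      qed
      then have ex: "\<exists>x\<in>P. \<forall>i\<in>I'. \<not> nzc ns i x" using y0P by blast
      have bb: "card I' \<ge> 2 \<or> (I' \<noteq> {} \<and> (\<exists>x\<in>P. \<forall>i\<in>I'. \<not> nzc ns i x))" using ex False by blast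
      have "of_bool (card I' \<ge> 2 \<or> (I' \<noteq> {} \<and> (\<exists>x\<in>P. \<forall>i\<in>I'. \<not> nzc ns i x))) = (1::nat)"
        using bb by (simp only: of_bool_eq(2) simp_thms)
      then have "(\<Sum>i\<in>I'. ns!i) + 2 \<le> card P" using IH by linarith
      then show ?thesis using f1 fb0 Tle by linarith
    next
      case True
      have bj: "?b \<longleftrightarrow> (\<exists>x\<in>W. \<not> nzc ns j x)" using True by auto
      have cP: "card P \<ge> 1" using fP by (simp add: Suc_le_eq card_gt_0_iff)
      have sI: "(\<Sum>i\<in>insert j I'. ns!i) = ns!j" using True by simp
      show ?thesis
      proof (cases "\<exists>x\<in>W. \<not> nzc ns j x")
        case False
        then have "of_bool ?b = (0::nat)" using bj by simp
        then show ?thesis using sI f1 fb0 cP by linarith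
      next
        case True
        then have ob: "of_bool ?b = (1::nat)" using bj by simp
        from True obtain w where w: "w \<in> W" "\<not> nzc ns j w" by auto
        show ?thesis
        proof (cases "zp j w = y0")
          case True
          have "insert w {z\<in>W. zp j z = y0 \<and> nzc ns j z} \<subseteq> ?Fb y0" using w True by auto
          then have "card (insert w {z\<in>W. zp j z = y0 \<and> nzc ns j z}) \<le> card (?Fb y0)"
            using W(3) by (intro card_mono) auto
          moreover have "card (insert w {z\<in>W. zp j z = y0 \<and> nzc ns j z}) = Suc (card {z\<in>W. zp j z = y0 \<and> nzc ns j z})"
            using w W(3) by (intro card_insert_disjoint) auto
          moreover have "ns!j + 1 \<le> card {z\<in>W. zp j z = y0 \<and> nzc ns j z}"
            using swap_count[OF W(5) W(6) x0(1) W(3) j x0(2)] by (simp add: y0_def)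
          ultimately show ?thesis using sI ob f1 cP by linarith
        next
          case False
          have "{y0, zp j w} \<subseteq> P" using y0P w by (auto simp: P_def)
          then have "card {y0, zp j w} \<le> card P" using fP by (intro card_mono) auto
          then have "card P \<ge> 2" using False by simp
          then show ?thesis using sI ob f1 fb0 by linarith
        qed
      qed
    qed
  qed
qed



lemma tr_inv: "tr a b (tr a b j) = j" by (simp add: tr_def)

lemma tr_bij: "a \<le> n \<Longrightarrow> b \<le> n \<Longrightarrow> bij_betw (tr a b) {..n} {..n}"
  by (rule bij_betw_byWitness[where f'="tr a b"]) (auto simp: tr_inv tr_def)

lemma weyl_sw:
  assumes c: "c \<in> wt_space ns" and i: "i < length ns" and ab: "a \<le> ns!i" "b \<le> ns!i"
  shows "weyl_act ns (\<lambda>i'. if i' = i then tr a b else id) c = sw i a b c"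
proof (intro ext)
  fix i' j
  show "weyl_act ns (\<lambda>i'. if i' = i then tr a b else id) c i' j = sw i a b c i' j"
  proof (cases "(i', j) \<in> idx ns")
    case True then show ?thesis by (simp add: weyl_act_def sw_def)
  next
    case False
    have z: "c i' j = 0" using wt_zero[OF c False] .
    show ?thesis
    proof (cases "i' = i")
      case True
      then have "j > ns!i" using False i by (auto simp: idx_def)
      then have "tr a b j = j" using ab by (auto simp: tr_def)
      then show ?thesis using False z True by (simp add: weyl_act_def sw_def)
    next
      case F2: False then show ?thesis using False z by (simp add: weyl_act_def sw_def)
    qed
  qed
qed

lemma weyl_mem:
  assumes i: "i < length ns" and ab: "a \<le> ns!i" "b \<le> ns!i"
  shows "(\<lambda>i'. if i' = i then tr a b else id) \<in> weyl ns"
  unfolding weyl_def using tr_bij[OF ab] by (auto simp: bij_betw_id)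

lemma weights_wt: "c \<in> weights ns d \<rho> \<Longrightarrow> c \<in> wt_space ns"
  by (simp add: weights_def)

lemma max_closed:
  assumes rep: "is_rep ns d \<rho>" and B: "weyl_inv_inner ns B"
  shows "closed_sw ns (max_weights ns d \<rho> B)"
  unfolding closed_sw_def
proof (intro ballI allI impI)
  fix c i a b assume c: "c \<in> max_weights ns d \<rho> B" and i: "i < length ns" and ab: "a \<le> ns!i" "b \<le> ns!i"
  have cw: "c \<in> weights ns d \<rho>" and mx: "\<forall>c'\<in>weights ns d \<rho>. B c' c' \<le> B c c"
    using c by (auto simp: max_weights_def)
  have cW: "c \<in> wt_space ns" using weights_wt[OF cw] .
  have sw: "sw i a b c \<in> weights ns d \<rho>" using weights_swap[OF rep cw i ab] .
  have "B (weyl_act ns (\<lambda>i'. if i' = i then tr a b else id) c) (weyl_act ns (\<lambda>i'. if i' = i then tr a b else id) c) = B c c"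
    using B weyl_mem[OF i ab] cW unfolding weyl_inv_inner_def by blast
  then have "B (sw i a b c) (sw i a b c) = B c c" using weyl_sw[OF cW i ab] by simp
  then show "sw i a b c \<in> max_weights ns d \<rho> B" using sw mx by (simp add: max_weights_def)
qed

lemma finite_weights:
  assumes rep: "is_rep ns d \<rho>"
  shows "finite (weights ns d \<rho>)"
proof -
  define D where "D = {(i,a,b). i < length ns \<and> a \<le> ns!i \<and> b \<le> ns!i \<and> a \<noteq> b}"
  define Hd where "Hd = (\<lambda>(i,a,b). elt ns i (hm (ns!i+1) a b))"
  define E where "E = (\<lambda>p. {\<mu>. \<exists>v\<in>carrier_vec d. v \<noteq> 0\<^sub>v d \<and> \<rho> (Hd p) *\<^sub>v v = \<mu> \<cdot>\<^sub>v v})"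
  define g where "g = (\<lambda>c. restrict (\<lambda>p. wt_eval ns c (Hd p)) D)"
  have HdC: "Hd p \<in> cartan ns" if "p \<in> D" for p
    using that hm_cartan unfolding D_def Hd_def by auto
  have fD: "finite D"
  proof -
    have "D \<subseteq> Sigma {..<length ns} (\<lambda>i. {..ns!i} \<times> {..ns!i})" unfolding D_def by auto
    moreover have "finite (Sigma {..<length ns} (\<lambda>i. {..ns!i} \<times> {..ns!i}))" by auto
    ultimately show ?thesis by (rule finite_subset)
  qed
  have fE: "finite (E p)" if "p \<in> D" for p
    unfolding E_def by (rule finite_eigs[OF rho_carrier[OF rep cartan_lie[OF HdC[OF that]]]])
  have img: "g ` weights ns d \<rho> \<subseteq> PiE D E"
  proof
    fix f assume "f \<in> g ` weights ns d \<rho>"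
    then obtain c where c: "c \<in> weights ns d \<rho>" and f: "f = g c" by auto
    from c obtain v where v: "v \<in> carrier_vec d" "v \<noteq> 0\<^sub>v d"
      and wv: "\<And>H. H \<in> cartan ns \<Longrightarrow> \<rho> H *\<^sub>v v = wt_eval ns c H \<cdot>\<^sub>v v"
      unfolding weights_def by blast
    show "f \<in> PiE D E" unfolding f g_def E_def using v wv HdC by auto
  qed
  have inj: "inj_on g (weights ns d \<rho>)"
  proof (rule inj_onI)
    fix c c' assume c: "c \<in> weights ns d \<rho>" and c': "c' \<in> weights ns d \<rho>" and e: "g c = g c'"
    have cW: "c \<in> wt_space ns" and cW': "c' \<in> wt_space ns" using c c' weights_wt by auto
    have diff: "c i a - c i b = c' i a - c' i b" if "i < length ns" "a \<le> ns!i" "b \<le> ns!i" for i a b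
    proof (cases "a = b")
      case True then show ?thesis by simp
    next
      case False
      then have p: "(i,a,b) \<in> D" using that by (simp add: D_def)
      have "g c (i,a,b) = g c' (i,a,b)" using e by simp
      then have "wt_eval ns c (Hd (i,a,b)) = wt_eval ns c' (Hd (i,a,b))" using p by (simp add: g_def)
      then have "complex_of_real (c i a - c i b) = complex_of_real (c' i a - c' i b)"
        using wt_eval_hm[OF cW that False] wt_eval_hm[OF cW' that False] by (simp add: Hd_def)
      then show ?thesis by (simp only: of_real_eq_iff)
    qed
    show "c = c'"
    proof (intro ext)
      fix i j
      show "c i j = c' i j"
      proof (cases "(i,j) \<in> idx ns")
        case False then show ?thesis using wt_zero[OF cW False] wt_zero[OF cW' False] by simp
      next
        case True
        then have i: "i < length ns" and j: "j \<le> ns!i" by (auto simp: idx_def)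
        have cst: "c i b - c' i b = c i j - c' i j" if "b \<le> ns!i" for b
          using diff[OF i j that] by simp
        have "(\<Sum>b\<le>ns!i. c i b - c' i b) = 0"
          using wt_sum0[OF cW i] wt_sum0[OF cW' i] by (simp add: sum_subtractf)
        moreover have "(\<Sum>b\<le>ns!i. c i b - c' i b) = (\<Sum>b\<le>ns!i. c i j - c' i j)"
          by (rule sum.cong[OF refl]) (rule cst, simp)
        ultimately have "real (Suc (ns!i)) * (c i j - c' i j) = 0" by simp
        then show ?thesis by simp
      qed
    qed
  qed
  show ?thesis
    by (rule inj_on_finite[OF inj img]) (use fD fE in \<open>auto intro: finite_PiE\<close>)
qed

lemma cover:
  assumes span: "real_span M = wt_space ns" and i: "i < length ns" and n1: "ns!i \<ge> 1"
  shows "\<exists>x\<in>M. nzc ns i x"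
proof (rule ccontr)
  assume "\<not> ?thesis"
  then have z: "\<And>x. x \<in> M \<Longrightarrow> x i 0 = 0" unfolding nzc_def by auto
  define w :: "nat \<Rightarrow> nat \<Rightarrow> real" where
    "w = (\<lambda>i' j. if i' = i then (if j = 0 then 1 else if j = 1 then -1 else 0) else 0)"
  have "w \<in> wt_space ns"
  proof (rule wt_spaceI)
    fix i' j assume "(i', j) \<notin> idx ns"
    then show "w i' j = 0" using i n1 by (auto simp: w_def idx_def)
  next
    fix i' assume "i' < length ns"
    show "(\<Sum>j\<le>ns!i'. w i' j) = 0"
    proof (cases "i' = i")
      case False then show ?thesis by (simp add: w_def)
    next
      case True
      have "(\<Sum>j\<le>ns!i'. w i' j) = (\<Sum>j\<le>ns!i. (if j = 0 then 1 else 0) - (if j = 1 then 1 else 0))"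
        using True by (intro sum.cong) (auto simp: w_def)
      also have "\<dots> = 0" using n1 by (simp add: sum_subtractf)
      finally show ?thesis .
    qed
  qed
  then have "w \<in> real_span M" using span by simp
  then obtain T a where T: "finite T" "T \<subseteq> M" and wd: "w = (\<lambda>i j. \<Sum>t\<in>T. a t * t i j)"
    unfolding real_span_def by blast
  have "w i 0 = (\<Sum>t\<in>T. a t * t i 0)" using wd by simp
  also have "\<dots> = 0" using T z by (intro sum.neutral) auto
  finally show False by (simp add: w_def)
qed


theorem lemma5p6:
  fixes ns :: "nat list" and d :: nat
    and \<rho> :: "(nat \<Rightarrow> complex mat) \<Rightarrow> complex mat"
    and B :: "(nat \<Rightarrow> nat \<Rightarrow> real) \<Rightarrow> (nat \<Rightarrow> nat \<Rightarrow> real) \<Rightarrow> real"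
  assumes "ns \<noteq> []"
    and "\<forall>n \<in> set ns. n \<ge> 1"
    and "faithful_rep ns d \<rho>"
    and "weyl_inv_inner ns B"
    and "real_span (max_weights ns d \<rho> B) = wt_space ns"
  shows "card (max_weights ns d \<rho> B) \<ge> sum_list ns + 1 \<and>
         (card (max_weights ns d \<rho> B) = sum_list ns + 1 \<longrightarrow> length ns = 1)"
proof -
  have rep: "is_rep ns d \<rho>" using assms(3) by (simp add: faithful_rep_def)
  define M where "M = max_weights ns d \<rho> B"
  have Mw: "M \<subseteq> weights ns d \<rho>" by (auto simp: M_def max_weights_def)
  have fM: "finite M" using finite_subset[OF Mw finite_weights[OF rep]] .
  have MW: "M \<subseteq> wt_space ns" using Mw weights_wt by blast
  have cl: "closed_sw ns M" unfolding M_def by (rule max_closed[OF rep assms(4)])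
  have cov: "\<forall>i\<in>{..<length ns}. \<exists>x\<in>M. nzc ns i x"
  proof
    fix i assume "i \<in> {..<length ns}"
    then have i: "i < length ns" by simp
    then have "ns!i \<ge> 1" using assms(2) by simp
    then show "\<exists>x\<in>M. nzc ns i x" using cover[OF assms(5)[folded M_def] i] by blast
  qed
  have ne: "M \<noteq> {}"
  proof -
    have "0 \<in> {..<length ns}" using assms(1) by simp
    then show ?thesis using cov by blast
  qed
  have main: "(\<Sum>i\<in>{..<length ns}. ns!i) + 1 + of_bool (card {..<length ns} \<ge> 2 \<or> ({..<length ns} \<noteq> {} \<and> (\<exists>x\<in>M. \<forall>i\<in>{..<length ns}. \<not> nzc ns i x))) \<le> card M"
    by (rule count_main[OF finite_lessThan subset_refl assms(2) fM ne MW cl cov])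
  have s: "(\<Sum>i\<in>{..<length ns}. ns!i) = sum_list ns"
    by (simp add: sum_list_sum_nth atLeast0LessThan)
  have c: "card {..<length ns} = length ns" by simp
  have ob: "length ns \<ge> 2 \<Longrightarrow> of_bool (card {..<length ns} \<ge> 2 \<or> ({..<length ns} \<noteq> {} \<and> (\<exists>x\<in>M. \<forall>i\<in>{..<length ns}. \<not> nzc ns i x))) = (1::nat)"
    using c by simp
  have "length ns \<ge> 1" using assms(1) by (cases ns) auto
  then show ?thesis using main s ob unfolding M_def[symmetric]
    by (cases "length ns \<ge> 2") auto
qed


end
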